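(* Let $n\ge2$, $k\in\{1,\ldots,n\}$, $r\in\mathbb{R}$, and $x^0\in\mathbb{R}^n$ with $x^0_1\ge\cdots\ge x^0_n$ and $\sum_{i=1}^k x^0_i>r$. Beginning from $(k_0,k_1)=(k-1,k)$, every index pair $(k_0,k_1)$ on the trajectory generated by the ESGS procedure satisfies $\mathtt{kkt}_1(k_0,k_1)$, $\mathtt{kkt}_3(k_0,k_1)$ and $\mathtt{kkt}_4(k_0,k_1)$.
   Context: Conventions: $x^0_0:=+\infty$, $x^0_{n+1}:=-\infty$. For $k_0\in\{0,\ldots,k-1\}$ and $k_1\in\{k,\ldots,n\}$ define $S_\alpha=\sum_{i=1}^{k_0}x^0_i-r$, $S_\beta=\sum_{i=k_0+1}^{k_1}x^0_i$, $\rho=k_0(k_1-k_0)+(k-k_0)^2$, $\theta(k_0,k_1)=(k_0S_\beta-(k-k_0)S_\alpha)/\rho$, $\lambda(k_0,k_1)=((k-k_0)S_\beta+(k_1-k_0)S_\alpha)/\rho$. KKT indicators: $\mathtt{kkt}_1$: $\lambda>0$; $\mathtt{kkt}_2$: $x^0_{k_0}>\theta+\lambda$; $\mathtt{kkt}_3$: $\theta+\lambda\ge x^0_{k_0+1}$; $\mathtt{kkt}_4$: $x^0_{k_1}\ge\theta$; $\mathtt{kkt}_5$: $\theta>x^0_{k_1+1}$ (all evaluated at $(k_0,k_1)$). ESGS trajectory: start at $(k_0,k_1)=(k-1,k)$ and repeat: if $\mathtt{kkt}_2\wedge\mathtt{kkt}_5$ holds, stop; else if $\mathtt{kkt}_2$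 holds, set $k_1\gets k_1+1$; else set $k_0\gets k_0-1$. *)

theory Defs
  imports Complex_Main "HOL-Library.Extended_Real"
begin

(* x0 is given as a function on indices 1..n; the conventions
   x0_0 = +infinity and x0_(n+1) = -infinity are realised in ereal. *)
definition xe :: "nat \<Rightarrow> (nat \<Rightarrow> real) \<Rightarrow> nat \<Rightarrow> ereal" where
  "xe n x i = (if i = 0 then \<infinity> else if i = n + 1 then -\<infinity> else ereal (x i))"

definition S_alpha :: "(nat \<Rightarrow> real) \<Rightarrow> real \<Rightarrow> nat \<Rightarrow> real" where
  "S_alpha x r k0 = (\<Sum>i=1..k0. x i) - r"

definition S_beta :: "(nat \<Rightarrow> real) \<Rightarrow> nat \<Rightarrow> nat \<Rightarrow> real" where
  "S_beta x k0 k1 = (\<Sum>i=k0+1..k1. x i)"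

definition rho :: "nat \<Rightarrow> nat \<Rightarrow> nat \<Rightarrow> real" where
  "rho k k0 k1 = real k0 * (real k1 - real k0) + (real k - real k0)^2"

definition theta :: "(nat \<Rightarrow> real) \<Rightarrow> real \<Rightarrow> nat \<Rightarrow> nat \<Rightarrow> nat \<Rightarrow> real" where
  "theta x r k k0 k1 =
     (real k0 * S_beta x k0 k1 - (real k - real k0) * S_alpha x r k0) / rho k k0 k1"

definition lam :: "(nat \<Rightarrow> real) \<Rightarrow> real \<Rightarrow> nat \<Rightarrow> nat \<Rightarrow> nat \<Rightarrow> real" where
  "lam x r k k0 k1 =
     ((real k - real k0) * S_beta x k0 k1 + (real k1 - real k0) * S_alpha x r k0) / rho k k0 k1"

definition kkt1 :: "(nat \<Rightarrow> real) \<Rightarrow> real \<Rightarrow> nat \<Rightarrow> nat \<Rightarrow> nat \<Rightarrow> bool" where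
  "kkt1 x r k k0 k1 \<longleftrightarrow> lam x r k k0 k1 > 0"

definition kkt2 :: "nat \<Rightarrow> (nat \<Rightarrow> real) \<Rightarrow> real \<Rightarrow> nat \<Rightarrow> nat \<Rightarrow> nat \<Rightarrow> bool" where
  "kkt2 n x r k k0 k1 \<longleftrightarrow> xe n x k0 > ereal (theta x r k k0 k1 + lam x r k k0 k1)"

definition kkt3 :: "nat \<Rightarrow> (nat \<Rightarrow> real) \<Rightarrow> real \<Rightarrow> nat \<Rightarrow> nat \<Rightarrow> nat \<Rightarrow> bool" where
  "kkt3 n x r k k0 k1 \<longleftrightarrow> ereal (theta x r k k0 k1 + lam x r k k0 k1) \<ge> xe n x (k0 + 1)"

definition kkt4 :: "nat \<Rightarrow> (nat \<Rightarrow> real) \<Rightarrow> real \<Rightarrow> nat \<Rightarrow> nat \<Rightarrow> nat \<Rightarrow> bool" where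
  "kkt4 n x r k k0 k1 \<longleftrightarrow> xe n x k1 \<ge> ereal (theta x r k k0 k1)"

definition kkt5 :: "nat \<Rightarrow> (nat \<Rightarrow> real) \<Rightarrow> real \<Rightarrow> nat \<Rightarrow> nat \<Rightarrow> nat \<Rightarrow> bool" where
  "kkt5 n x r k k0 k1 \<longleftrightarrow> ereal (theta x r k k0 k1) > xe n x (k1 + 1)"

inductive esgs_traj :: "nat \<Rightarrow> (nat \<Rightarrow> real) \<Rightarrow> real \<Rightarrow> nat \<Rightarrow> nat \<times> nat \<Rightarrow> bool"
  for n x r k where
  start: "esgs_traj n x r k (k - 1, k)"
| step_k1: "esgs_traj n x r k (k0, k1) \<Longrightarrow> \<not> (kkt2 n x r k k0 k1 \<and> kkt5 n x r k k0 k1) \<Longrightarrow>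
            kkt2 n x r k k0 k1 \<Longrightarrow> esgs_traj n x r k (k0, k1 + 1)"
| step_k0: "esgs_traj n x r k (k0, k1) \<Longrightarrow> \<not> (kkt2 n x r k k0 k1 \<and> kkt5 n x r k k0 k1) \<Longrightarrow>
            \<not> kkt2 n x r k k0 k1 \<Longrightarrow> esgs_traj n x r k (k0 - 1, k1)"

end

theory Submission
  imports Defs
begin

lemma sys:
  fixes P Q R Sa Sb :: real
  assumes "P*(Q-P)+(R-P)^2 > 0"
  shows "Sb = (Q-P)*((P*Sb - (R-P)*Sa)/(P*(Q-P)+(R-P)^2)) + (R-P)*(((R-P)*Sb + (Q-P)*Sa)/(P*(Q-P)+(R-P)^2))"
    and "Sa = P*(((R-P)*Sb + (Q-P)*Sa)/(P*(Q-P)+(R-P)^2)) - (R-P)*((P*Sb - (R-P)*Sa)/(P*(Q-P)+(R-P)^2))"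
proof -
  define r where "r = P*(Q-P)+(R-P)^2"
  have r0: "r \<noteq> 0" using assms r_def by simp
  have n1: "(Q-P)*(P*Sb - (R-P)*Sa) + (R-P)*((R-P)*Sb + (Q-P)*Sa) = Sb*r"
    unfolding r_def by (simp add: algebra_simps power2_eq_square)
  have n2: "P*((R-P)*Sb + (Q-P)*Sa) - (R-P)*(P*Sb - (R-P)*Sa) = Sa*r"
    unfolding r_def by (simp add: algebra_simps power2_eq_square)
  have "(Q-P)*((P*Sb - (R-P)*Sa)/r) + (R-P)*(((R-P)*Sb + (Q-P)*Sa)/r)
     = ((Q-P)*(P*Sb - (R-P)*Sa) + (R-P)*((R-P)*Sb + (Q-P)*Sa))/r"
    using r0 by (simp add: field_simps)
  also have "... = Sb" using n1 r0 by simp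
  finally show "Sb = (Q-P)*((P*Sb - (R-P)*Sa)/(P*(Q-P)+(R-P)^2)) + (R-P)*(((R-P)*Sb + (Q-P)*Sa)/(P*(Q-P)+(R-P)^2))"
    unfolding r_def by simp
  have "P*(((R-P)*Sb + (Q-P)*Sa)/r) - (R-P)*((P*Sb - (R-P)*Sa)/r)
     = (P*((R-P)*Sb + (Q-P)*Sa) - (R-P)*(P*Sb - (R-P)*Sa))/r"
    using r0 by (simp add: field_simps)
  also have "... = Sa" using n2 r0 by simp
  finally show "Sa = P*(((R-P)*Sb + (Q-P)*Sa)/(P*(Q-P)+(R-P)^2)) - (R-P)*((P*Sb - (R-P)*Sa)/(P*(Q-P)+(R-P)^2))"
    unfolding r_def by simp
qed

lemma step1_alg:
  fixes P Q K Sa Sb a :: real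
  assumes "P \<ge> 0" "Q - P \<ge> 1" "K - P \<ge> 1"
    and "a \<ge> (P*Sb - (K-P)*Sa)/(P*(Q-P)+(K-P)^2)"
  shows "((K-P)*(Sb+a) + ((Q+1)-P)*Sa)/(P*((Q+1)-P)+(K-P)^2) \<ge> ((K-P)*Sb + (Q-P)*Sa)/(P*(Q-P)+(K-P)^2)"
    and "(P*(Sb+a) - (K-P)*Sa)/(P*((Q+1)-P)+(K-P)^2) + ((K-P)*(Sb+a) + ((Q+1)-P)*Sa)/(P*((Q+1)-P)+(K-P)^2)
        \<ge> (P*Sb - (K-P)*Sa)/(P*(Q-P)+(K-P)^2) + ((K-P)*Sb + (Q-P)*Sa)/(P*(Q-P)+(K-P)^2)"
    and "a \<ge> (P*(Sb+a) - (K-P)*Sa)/(P*((Q+1)-P)+(K-P)^2)"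
proof -
  define \<rho> where "\<rho> = P*(Q-P)+(K-P)^2"
  define \<rho>' where "\<rho>' = P*((Q+1)-P)+(K-P)^2"
  have "(K-P)^2 \<ge> 1" using assms(3) by (metis le_add_same_cancel2 one_le_power zero_le_one)
  moreover have "P*(Q-P) \<ge> 0" using assms by simp
  ultimately have rp: "\<rho> > 0" unfolding \<rho>_def by linarith
  have r': "\<rho>' = \<rho> + P" unfolding \<rho>_def \<rho>'_def by (simp add: algebra_simps)
  have rp': "\<rho>' > 0" using rp assms r' by linarith
  define th where "th = (P*Sb - (K-P)*Sa)/\<rho>"
  define la where "la = ((K-P)*Sb + (Q-P)*Sa)/\<rho>"
  have Sb: "Sb = (Q-P)*th + (K-P)*la" and Sa: "Sa = P*la - (K-P)*th"
    using sys[where Sa=Sa and Sb=Sb and P=P and Q=Q and R=K] rp unfolding th_def la_def \<rho>_def by auto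
  define q where "q = (a - th)/\<rho>'"
  have q0: "q \<ge> 0" using assms(4) rp' unfolding q_def th_def \<rho>_def by simp
  have aq: "a - th = \<rho>' * q" unfolding q_def using rp' by simp
  have th': "(P*(Sb+a) - (K-P)*Sa)/\<rho>' = th + P*q"
  proof -
    have "P*(Sb+a) - (K-P)*Sa = \<rho>'*th + P*(a-th)"
      unfolding Sb Sa r' \<rho>_def by (simp add: algebra_simps power2_eq_square)
    then show ?thesis using rp' unfolding q_def by (simp add: field_simps)
  qed
  have la': "((K-P)*(Sb+a) + ((Q+1)-P)*Sa)/\<rho>' = la + (K-P)*q"
  proof -
    have "(K-P)*(Sb+a) + ((Q+1)-P)*Sa = \<rho>'*la + (K-P)*(a-th)"
      unfolding Sb Sa \<rho>'_def by (simp add: algebra_simps power2_eq_square)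
    then show ?thesis using rp' unfolding q_def by (simp add: field_simps)
  qed
  have A: "(K-P)*q \<ge> 0" "P*q \<ge> 0" using q0 assms by auto
  have B: "(\<rho>' - P) * q \<ge> 0" using q0 rp r' by simp
  show "((K-P)*(Sb+a) + ((Q+1)-P)*Sa)/(P*((Q+1)-P)+(K-P)^2) \<ge> ((K-P)*Sb + (Q-P)*Sa)/(P*(Q-P)+(K-P)^2)"
    using la' A unfolding \<rho>'_def la_def \<rho>_def by simp
  show "(P*(Sb+a) - (K-P)*Sa)/(P*((Q+1)-P)+(K-P)^2) + ((K-P)*(Sb+a) + ((Q+1)-P)*Sa)/(P*((Q+1)-P)+(K-P)^2)
        \<ge> (P*Sb - (K-P)*Sa)/(P*(Q-P)+(K-P)^2) + ((K-P)*Sb + (Q-P)*Sa)/(P*(Q-P)+(K-P)^2)"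
    using la' th' A unfolding \<rho>'_def la_def th_def \<rho>_def by simp
  show "a \<ge> (P*(Sb+a) - (K-P)*Sa)/(P*((Q+1)-P)+(K-P)^2)"
    using th' aq B unfolding \<rho>'_def[symmetric] by (simp add: algebra_simps)
qed


lemma step0_alg:
  fixes P Q K Sa Sb b :: real
  assumes "P \<ge> 1" "Q - P \<ge> 1" "K - P \<ge> 1" "Q \<ge> K"
    and "b \<le> (P*Sb - (K-P)*Sa)/(P*(Q-P)+(K-P)^2) + ((K-P)*Sb + (Q-P)*Sa)/(P*(Q-P)+(K-P)^2)"
  shows "((K-(P-1))*(Sb+b) + (Q-(P-1))*(Sa-b))/((P-1)*(Q-(P-1))+(K-(P-1))^2) \<ge> ((K-P)*Sb + (Q-P)*Sa)/(P*(Q-P)+(K-P)^2)"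
    and "((P-1)*(Sb+b) - (K-(P-1))*(Sa-b))/((P-1)*(Q-(P-1))+(K-(P-1))^2) + ((K-(P-1))*(Sb+b) + (Q-(P-1))*(Sa-b))/((P-1)*(Q-(P-1))+(K-(P-1))^2)
        \<ge> b"
    and "((P-1)*(Sb+b) - (K-(P-1))*(Sa-b))/((P-1)*(Q-(P-1))+(K-(P-1))^2) \<le> (P*Sb - (K-P)*Sa)/(P*(Q-P)+(K-P)^2)"
proof -
  define \<rho> where "\<rho> = P*(Q-P)+(K-P)^2"
  define \<rho>' where "\<rho>' = (P-1)*(Q-(P-1))+(K-(P-1))^2"
  have "(K-P)^2 \<ge> 1" using assms(3) by (metis le_add_same_cancel2 one_le_power zero_le_one)
  moreover have "P*(Q-P) \<ge> 0" using assms by simp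
  ultimately have rp: "\<rho> > 0" unfolding \<rho>_def by linarith
  have "(K-(P-1))^2 \<ge> 1" using assms(3) by (metis le_add_same_cancel2 one_le_power zero_le_one le_diff_eq diff_diff_eq2 add.commute order_trans le_add_same_cancel1)
  moreover have "(P-1)*(Q-(P-1)) \<ge> 0" using assms by simp
  ultimately have rp': "\<rho>' > 0" unfolding \<rho>'_def by linarith
  define th where "th = (P*Sb - (K-P)*Sa)/\<rho>"
  define la where "la = ((K-P)*Sb + (Q-P)*Sa)/\<rho>"
  have Sb: "Sb = (Q-P)*th + (K-P)*la" and Sa: "Sa = P*la - (K-P)*th"
    using sys[where Sa=Sa and Sb=Sb and P=P and Q=Q and R=K] rp unfolding th_def la_def \<rho>_def by auto
  define q where "q = (th + la - b)/\<rho>'"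
  have q0: "q \<ge> 0" using assms(5) rp' unfolding q_def th_def la_def \<rho>_def by simp
  have cq: "th + la - b = \<rho>' * q" unfolding q_def using rp' by simp
  have th': "((P-1)*(Sb+b) - (K-(P-1))*(Sa-b))/\<rho>' = th - K*q"
  proof -
    have "(P-1)*(Sb+b) - (K-(P-1))*(Sa-b) = \<rho>'*th - K*(th+la-b)"
      unfolding Sb Sa \<rho>'_def by (simp add: algebra_simps power2_eq_square)
    then show ?thesis using rp' unfolding q_def by (simp add: field_simps)
  qed
  have la': "((K-(P-1))*(Sb+b) + (Q-(P-1))*(Sa-b))/\<rho>' = la + (Q-K)*q"
  proof -
    have "(K-(P-1))*(Sb+b) + (Q-(P-1))*(Sa-b) = \<rho>'*la + (Q-K)*(th+la-b)"
      unfolding Sb Sa \<rho>'_def by (simp add: algebra_simps power2_eq_square)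
    then show ?thesis using rp' unfolding q_def by (simp add: field_simps)
  qed
  have A: "(Q-K)*q \<ge> 0" "K*q \<ge> 0" using q0 assms by auto
  have e: "\<rho>' + Q - 2*K = P*(Q-K) + K*(K-P)"
    unfolding \<rho>'_def by (simp add: algebra_simps power2_eq_square)
  have "P*(Q-K) + K*(K-P) \<ge> 0" using assms by simp
  then have B: "(\<rho>' + Q - 2*K) * q \<ge> 0" using q0 e by simp
  show "((K-(P-1))*(Sb+b) + (Q-(P-1))*(Sa-b))/((P-1)*(Q-(P-1))+(K-(P-1))^2) \<ge> ((K-P)*Sb + (Q-P)*Sa)/(P*(Q-P)+(K-P)^2)"
    using la' A unfolding \<rho>'_def la_def \<rho>_def by simp
  show "((P-1)*(Sb+b) - (K-(P-1))*(Sa-b))/((P-1)*(Q-(P-1))+(K-(P-1))^2) + ((K-(P-1))*(Sb+b) + (Q-(P-1))*(Sa-b))/((P-1)*(Q-(P-1))+(K-(P-1))^2)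
        \<ge> b"
    using la' th' cq B unfolding \<rho>'_def[symmetric] by (simp add: algebra_simps)
  show "((P-1)*(Sb+b) - (K-(P-1))*(Sa-b))/((P-1)*(Q-(P-1))+(K-(P-1))^2) \<le> (P*Sb - (K-P)*Sa)/(P*(Q-P)+(K-P)^2)"
    using th' A unfolding \<rho>'_def[symmetric] th_def \<rho>_def[symmetric] by simp
qed


lemma inv:
  fixes n k :: nat and r :: real and x :: "nat \<Rightarrow> real"
  assumes "1 \<le> k" and "k \<le> n"
    and "(\<Sum>i=1..k. x i) > r"
    and "esgs_traj n x r k (k0, k1)"
  shows "k0 < k \<and> k \<le> k1 \<and> k1 \<le> n \<and> lam x r k k0 k1 > 0 \<and>
         theta x r k k0 k1 + lam x r k k0 k1 \<ge> x (k0 + 1) \<and> x k1 \<ge> theta x r k k0 k1"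
  using assms(4)
proof (induction "(k0,k1)" arbitrary: k0 k1 rule: esgs_traj.induct)
  case start
  obtain m where km: "k = Suc m" using assms(1) by (cases k) auto
  have sb: "S_beta x (k-1) k = x k" unfolding S_beta_def km by simp
  have sa: "S_alpha x r (k-1) = (\<Sum>i=1..m. x i) - r" unfolding S_alpha_def km by simp
  have sk: "(\<Sum>i=1..k. x i) = (\<Sum>i=1..m. x i) + x k" unfolding km by simp
  have rh: "rho k (k-1) k = real k" unfolding rho_def km by (simp add: algebra_simps)
  have kpos: "real k > 0" using assms(1) by simp
  have l: "lam x r k (k-1) k = ((\<Sum>i=1..k. x i) - r) / real k"
    unfolding lam_def rh sb sa sk using km by simp
  have t: "theta x r k (k-1) k = x k - lam x r k (k-1) k"
    unfolding theta_def lam_def rh sb sa using kpos km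
    by (simp add: field_simps)
  show ?case using assms kpos l t km by simp
next
  case (step_k1 k0 k1)
  have IH: "k0 < k" "k \<le> k1" "k1 \<le> n" "lam x r k k0 k1 > 0"
     "theta x r k k0 k1 + lam x r k k0 k1 \<ge> x (k0 + 1)" "x k1 \<ge> theta x r k k0 k1"
    using step_k1 by auto
  have n5: "\<not> kkt5 n x r k k0 k1" using step_k1 by auto
  have kn: "k1 < n"
  proof (rule ccontr)
    assume "\<not> k1 < n" then have "k1 = n" using IH by simp
    then show False using n5 unfolding kkt5_def xe_def by simp
  qed
  have a: "theta x r k k0 k1 \<le> x (k1+1)" using n5 kn unfolding kkt5_def xe_def by simp
  have sb: "S_beta x k0 (k1+1) = S_beta x k0 k1 + x (k1+1)" unfolding S_beta_def using IH by simp
  have rk1: "real (k1+1) = real k1 + 1" by simp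
  note S = step1_alg[where P="real k0" and Q="real k1" and K="real k" and Sa="S_alpha x r k0"
     and Sb="S_beta x k0 k1" and a="x (k1+1)"]
  have c: "real k0 \<ge> 0" "real k1 - real k0 \<ge> 1" "real k - real k0 \<ge> 1" using IH by auto
  have h: "x (k1+1) \<ge> (real k0 * S_beta x k0 k1 - (real k - real k0) * S_alpha x r k0) / (real k0 * (real k1 - real k0) + (real k - real k0)^2)"
    using a unfolding theta_def rho_def by simp
  have "lam x r k k0 (k1+1) \<ge> lam x r k k0 k1"
    unfolding lam_def rho_def sb rk1 by (rule S(1)[OF c h])
  moreover have "theta x r k k0 (k1+1) + lam x r k k0 (k1+1) \<ge> theta x r k k0 k1 + lam x r k k0 k1"
    unfolding lam_def theta_def rho_def sb rk1 by (rule S(2)[OF c h])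
  moreover have "x (k1+1) \<ge> theta x r k k0 (k1+1)"
    unfolding theta_def rho_def sb rk1 by (rule S(3)[OF c h])
  ultimately show ?case using IH kn by auto
next
  case (step_k0 k0 k1)
  have IH: "k0 < k" "k \<le> k1" "k1 \<le> n" "lam x r k k0 k1 > 0"
     "theta x r k k0 k1 + lam x r k k0 k1 \<ge> x (k0 + 1)" "x k1 \<ge> theta x r k k0 k1"
    using step_k0 by auto
  have n2: "\<not> kkt2 n x r k k0 k1" using step_k0 by auto
  have k0p: "k0 \<ge> 1"
  proof (rule ccontr)
    assume "\<not> k0 \<ge> 1" then have "k0 = 0" by simp
    then show False using n2 unfolding kkt2_def xe_def by simp
  qed
  obtain m where m: "k0 = Suc m" using k0p by (cases k0) auto
  have b: "x k0 \<le> theta x r k k0 k1 + lam x r k k0 k1" using n2 k0p IH unfolding kkt2_def xe_def by simp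
  have sb: "S_beta x (k0-1) k1 = S_beta x k0 k1 + x k0" unfolding S_beta_def using IH m
    by (simp add: sum.atLeast_Suc_atMost)
  have sa: "S_alpha x r (k0-1) = S_alpha x r k0 - x k0" unfolding S_alpha_def m by simp
  have rk: "real (k0 - 1) = real k0 - 1" using k0p by simp
  have k01: "k0 - 1 + 1 = k0" using k0p by simp
  note S = step0_alg[where P="real k0" and Q="real k1" and K="real k" and Sa="S_alpha x r k0"
     and Sb="S_beta x k0 k1" and b="x k0"]
  have c: "real k0 \<ge> 1" "real k1 - real k0 \<ge> 1" "real k - real k0 \<ge> 1" "real k1 \<ge> real k" using IH k0p by auto
  have h: "x k0 \<le> (real k0 * S_beta x k0 k1 - (real k - real k0) * S_alpha x r k0) / (real k0 * (real k1 - real k0) + (real k - real k0)^2)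
     + ((real k - real k0) * S_beta x k0 k1 + (real k1 - real k0) * S_alpha x r k0) / (real k0 * (real k1 - real k0) + (real k - real k0)^2)"
    using b unfolding theta_def lam_def rho_def by simp
  have "lam x r k (k0-1) k1 \<ge> lam x r k k0 k1"
    using S(1)[OF c h] unfolding lam_def rho_def sb sa rk by simp
  moreover have "theta x r k (k0-1) k1 + lam x r k (k0-1) k1 \<ge> x k0"
    using S(2)[OF c h] unfolding lam_def theta_def rho_def sb sa rk by simp
  moreover have "theta x r k (k0-1) k1 \<le> theta x r k k0 k1"
    using S(3)[OF c h] unfolding theta_def rho_def sb sa rk by simp
  ultimately show ?case using IH k01 by auto
qed

theorem lemma3p4:
  fixes n k :: nat and r :: real and x :: "nat \<Rightarrow> real"
  assumes "n \<ge> 2" and "1 \<le> k" and "k \<le> n"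
    and "\<And>i j. 1 \<le> i \<Longrightarrow> i \<le> j \<Longrightarrow> j \<le> n \<Longrightarrow> x j \<le> x i"
    and "(\<Sum>i=1..k. x i) > r"
    and "esgs_traj n x r k (k0, k1)"
  shows "kkt1 x r k k0 k1 \<and> kkt3 n x r k k0 k1 \<and> kkt4 n x r k k0 k1"
proof -
  have I: "k0 < k" "k \<le> k1" "k1 \<le> n" "lam x r k k0 k1 > 0"
     "theta x r k k0 k1 + lam x r k k0 k1 \<ge> x (k0 + 1)" "x k1 \<ge> theta x r k k0 k1"
    using inv[OF assms(2,3,5,6)] by auto
  have e1: "xe n x (k0+1) = ereal (x (k0+1))" unfolding xe_def using I assms by simp
  have e2: "xe n x k1 = ereal (x k1)" unfolding xe_def using I assms by simp
  show ?thesis unfolding kkt1_def kkt3_def kkt4_def e1 e2 using I by simp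
qed

end
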